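(* Let $s\in\mathbb{N}$, let $B$ be a Banach space of real functions on $[0,1]^s$ with norm $\|\cdot\|_B$, and let $S$ be a collection of finite multisets of points in $[0,1]^s$ equipped with a probability distribution, $P$ denoting a random element of $S$. Suppose $\epsilon>0$ and $\delta\in(0,1)$ satisfy \[\Pr\left[e^{\mathrm{wor}}(Q_P;B)\le\epsilon\right]\ge1-\delta.\] Let $r$ be an odd positive integer and let $P_1,\ldots,P_r$ be drawn independently from $S$ according to the same distribution. Then \[\Pr\left[e^{\mathrm{wor}}(M_r;B)\le\epsilon\right]\ge1-\binom{r}{(r+1)/2}\delta^{(r+1)/2}.\]
   Context: For a finite multiset $P\subset[0,1]^s$ with $N=|P|$, $Q_P(f)=\frac1N\sum_{\boldsymbol x\in P}f(\boldsymbol x)$ and $I_s(f)=\int_{[0,1]^s}f(\boldsymbol x)\,\mathrm d\boldsymbol x$. The median rule is $M_r(f)=\mathrm{median}(Q_{P_1}(f),\ldots,Q_{P_r}(f))$. For a (deterministic, given realization) rule $A$, the worst-case error is $e^{\mathrm{wor}}(A;B)=\sup_{f\in B,\|f\|_B\le1}|A(f)-I_s(f)|$. *)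

theory Defs
  imports "HOL-Probability.Probability" "HOL-Library.Multiset"
begin

text \<open>The unit cube [0,1]^s, with s = CARD('n).\<close>
definition unit_cube :: "(real ^ 'n) set" where
  "unit_cube = {x. \<forall>i. 0 \<le> x $ i \<and> x $ i \<le> 1}"

text \<open>B is a real Banach space of functions on the unit cube with norm nb.
  Functions are represented extensionally: they vanish outside the cube.\<close>
definition banach_fun_space :: "(real ^ 'n \<Rightarrow> real) set \<Rightarrow> ((real ^ 'n \<Rightarrow> real) \<Rightarrow> real) \<Rightarrow> bool" where
  "banach_fun_space B nb \<longleftrightarrow>
     (\<forall>f\<in>B. \<forall>x. x \<notin> unit_cube \<longrightarrow> f x = 0) \<and>
     (\<lambda>x. 0) \<in> B \<and>
     (\<forall>f\<in>B. \<forall>g\<in>B. (\<lambda>x. f x + g x) \<in> B) \<and>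
     (\<forall>c::real. \<forall>f\<in>B. (\<lambda>x. c * f x) \<in> B) \<and>
     (\<forall>f\<in>B. 0 \<le> nb f) \<and>
     (\<forall>f\<in>B. nb f = 0 \<longleftrightarrow> f = (\<lambda>x. 0)) \<and>
     (\<forall>c::real. \<forall>f\<in>B. nb (\<lambda>x. c * f x) = \<bar>c\<bar> * nb f) \<and>
     (\<forall>f\<in>B. \<forall>g\<in>B. nb (\<lambda>x. f x + g x) \<le> nb f + nb g) \<and>
     (\<forall>u :: nat \<Rightarrow> (real ^ 'n \<Rightarrow> real).
        (\<forall>k. u k \<in> B) \<and>
        (\<forall>e>0. \<exists>K. \<forall>m\<ge>K. \<forall>n\<ge>K. nb (\<lambda>x. u m x - u n x) < e)
        \<longrightarrow> (\<exists>g\<in>B. (\<lambda>k. nb (\<lambda>x. u k x - g x)) \<longlonglongrightarrow> 0))"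

definition Q_rule :: "(real ^ 'n) multiset \<Rightarrow> (real ^ 'n \<Rightarrow> real) \<Rightarrow> real" where
  "Q_rule P f = (\<Sum>\<^sub># (image_mset f P)) / real (size P)"

definition I_s :: "(real ^ 'n \<Rightarrow> real) \<Rightarrow> real" where
  "I_s f = integral unit_cube f"

definition median_list :: "real list \<Rightarrow> real" where
  "median_list xs = sort xs ! (length xs div 2)"

definition median_rule :: "nat \<Rightarrow> (nat \<Rightarrow> (real ^ 'n) multiset) \<Rightarrow> (real ^ 'n \<Rightarrow> real) \<Rightarrow> real" where
  "median_rule r Ps f = median_list (map (\<lambda>i. Q_rule (Ps i) f) [0..<r])"

definition e_wor :: "((real ^ 'n \<Rightarrow> real) \<Rightarrow> real) \<Rightarrow> (real ^ 'n \<Rightarrow> real) set \<Rightarrow> ((real ^ 'n \<Rightarrow> real) \<Rightarrow> real) \<Rightarrow> ereal" where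
  "e_wor A B nb = (SUP f\<in>{f\<in>B. nb f \<le> 1}. ereal \<bar>A f - I_s f\<bar>)"

end

theory Submission
  imports Defs
begin

lemma median_close:
  fixes xs :: "real list" and c e :: real
  assumes odd: "odd (length xs)"
    and cnt: "card {i. i < length xs \<and> \<bar>xs!i - c\<bar> \<le> e} \<ge> (length xs + 1) div 2"
  shows "\<bar>median_list xs - c\<bar> \<le> e"
proof -
  define n where "n = length xs"
  define m where "m = n div 2"
  define ys where "ys = sort xs"
  have len: "length ys = n" by (simp add: ys_def n_def)
  have mn: "m < n" using odd by (simp add: m_def n_def) (metis odd_pos div_less_dividend one_less_numeral_iff semiring_norm(76))
  have n2: "n = 2*m+1" using odd by (simp add: m_def n_def)
  have srt: "sorted ys" by (simp add: ys_def)
  have cnt': "card {i. i < n \<and> \<bar>xs!i - c\<bar> \<le> e} \<ge> m+1" using cnt n2 by (simp add: n_def)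
  have fl: "\<And>P. length (filter P ys) = length (filter P xs)"
    by (simp add: ys_def filter_sort)
  have up: "ys!m \<le> c+e"
  proof (rule ccontr)
    assume "\<not> ys!m \<le> c+e"
    hence "{i. i < n \<and> ys!i \<le> c+e} \<subseteq> {..<m}"
      using srt len sorted_nth_mono[OF srt] by (auto simp: not_less) (smt (verit) le_less_linear len sorted_nth_mono srt)
    hence "card {i. i < n \<and> ys!i \<le> c+e} \<le> m" by (metis card_lessThan card_mono finite_lessThan)
    hence "length (filter (\<lambda>y. y \<le> c+e) xs) \<le> m" using fl[of "\<lambda>y. y \<le> c+e"] len
      by (simp add: length_filter_conv_card)
    moreover have "card {i. i < n \<and> \<bar>xs!i - c\<bar> \<le> e} \<le> card {i. i < n \<and> xs!i \<le> c+e}"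
      by (rule card_mono) auto
    ultimately show False using cnt' by (simp add: length_filter_conv_card n_def)
  qed
  have lo: "ys!m \<ge> c-e"
  proof (rule ccontr)
    assume "\<not> ys!m \<ge> c-e"
    hence "{i. i < n \<and> ys!i \<ge> c-e} \<subseteq> {m<..<n}"
    proof (safe)
      fix x assume "x < n" "c - e \<le> ys!x" "\<not> ys!m \<ge> c-e"
      show "x \<in> {m<..<n}"
      proof (rule ccontr)
        assume "x \<notin> {m<..<n}"
        hence "x \<le> m" using \<open>x < n\<close> by auto
        hence "ys!x \<le> ys!m" using sorted_nth_mono[OF srt] mn len by auto
        thus False using \<open>c - e \<le> ys!x\<close> \<open>\<not> ys!m \<ge> c-e\<close> by auto
      qed
    qed
    hence "card {i. i < n \<and> ys!i \<ge> c-e} \<le> card {m<..<n}" by (intro card_mono) auto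
    hence "length (filter (\<lambda>y. y \<ge> c-e) xs) \<le> m" using fl[of "\<lambda>y. y \<ge> c-e"] len n2
      by (simp add: length_filter_conv_card)
    moreover have "card {i. i < n \<and> \<bar>xs!i - c\<bar> \<le> e} \<le> card {i. i < n \<and> xs!i \<ge> c-e}"
      by (rule card_mono) auto
    ultimately show False using cnt' by (simp add: length_filter_conv_card n_def)
  qed
  show ?thesis using up lo by (simp add: median_list_def ys_def m_def n_def)
qed


lemma ewor_pointwise:
  assumes "e_wor A B nb \<le> ereal e" "f \<in> B" "nb f \<le> 1"
  shows "\<bar>A f - I_s f\<bar> \<le> e"
  using assms unfolding e_wor_def by (auto simp: SUP_le_iff)

theorem proposition3p2:
  fixes B :: "(real ^ 'n \<Rightarrow> real) set"
    and nb :: "(real ^ 'n \<Rightarrow> real) \<Rightarrow> real"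
    and M :: "(real ^ 'n) multiset measure"
    and \<epsilon> \<delta> :: real and r :: nat
  assumes "banach_fun_space B nb"
    and "prob_space M"
    and "space M \<subseteq> {P. set_mset P \<subseteq> unit_cube}"
    and "\<epsilon> > 0" and "0 < \<delta>" and "\<delta> < 1"
    and "{P \<in> space M. e_wor (Q_rule P) B nb \<le> ereal \<epsilon>} \<in> sets M"
    and "measure M {P \<in> space M. e_wor (Q_rule P) B nb \<le> ereal \<epsilon>} \<ge> 1 - \<delta>"
    and "odd r"
  shows "\<exists>A \<in> sets (PiM {..<r} (\<lambda>_. M)).
           A \<subseteq> {Ps \<in> space (PiM {..<r} (\<lambda>_. M)). e_wor (median_rule r Ps) B nb \<le> ereal \<epsilon>} \<and>
           measure (PiM {..<r} (\<lambda>_. M)) A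
             \<ge> 1 - real (r choose ((r + 1) div 2)) * \<delta> ^ ((r + 1) div 2)"
proof -
  interpret M: prob_space M by fact
  interpret P: finite_product_prob_space "\<lambda>_. M" "{..<r}"
    by unfold_locales (auto simp: M.sigma_finite_measure_axioms M.prob_space_axioms)
  define G where "G = {P \<in> space M. e_wor (Q_rule P) B nb \<le> ereal \<epsilon>}"
  define Bad where "Bad = space M - G"
  define k where "k = (r + 1) div 2"
  define I where "I = {..<r}"
  define SS where "SS = {S. S \<subseteq> I \<and> card S = k}"
  define E where "E = (\<lambda>S. PiE I (\<lambda>i. if i \<in> S then Bad else space M))"
  define PP where "PP = PiM {..<r} (\<lambda>_. M)"
  define A where "A = space PP - (\<Union>S\<in>SS. E S)"
  have Gs: "G \<in> sets M" using assms(7) by (simp add: G_def)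
  have Bads: "Bad \<in> sets M" using Gs by (simp add: Bad_def)
  have Bad_meas: "measure M Bad \<le> \<delta>"
    using assms(8) Gs M.prob_compl[OF Gs] by (simp add: Bad_def G_def)
  have finSS: "finite SS" by (simp add: SS_def I_def)
  have cardSS: "card SS = r choose k" using n_subsets[of I k] by (simp add: SS_def I_def)
  have Es: "E S \<in> sets PP" for S
    unfolding E_def PP_def I_def using Bads by (intro sets_PiM_I_finite) auto
  have Us: "(\<Union>S\<in>SS. E S) \<in> sets PP" using Es finSS by auto
  have As: "A \<in> sets PP" unfolding A_def using Us by auto
  have ES: "measure PP (E S) \<le> \<delta> ^ k" if "S \<in> SS" for S
  proof -
    have "measure PP (E S) = (\<Prod>i\<in>I. measure M (if i \<in> S then Bad else space M))"
      unfolding PP_def E_def I_def using Bads by (subst P.prob_times) auto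
    also have "\<dots> = (\<Prod>i\<in>I. if i \<in> S then measure M Bad else 1)"
      using M.prob_space by (intro prod.cong) auto
    also have "\<dots> = measure M Bad ^ card (I \<inter> S)"
      by (simp add: prod.If_cases I_def)
    also have "I \<inter> S = S" using that by (auto simp: SS_def)
    also have "card S = k" using that by (simp add: SS_def)
    also have "measure M Bad ^ k \<le> \<delta> ^ k"
      by (intro power_mono Bad_meas) auto
    finally show ?thesis .
  qed
  have U: "measure PP (\<Union>S\<in>SS. E S) \<le> real (r choose k) * \<delta> ^ k"
  proof -
    have "measure PP (\<Union>S\<in>SS. E S) \<le> (\<Sum>S\<in>SS. measure PP (E S))"
      unfolding PP_def using finSS Es unfolding PP_def
      by (intro P.finite_measure_subadditive_finite) auto
    also have "\<dots> \<le> (\<Sum>S\<in>SS. \<delta> ^ k)" by (intro sum_mono ES)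
    also have "\<dots> = real (r choose k) * \<delta> ^ k" using cardSS by simp
    finally show ?thesis .
  qed
  have mA: "measure PP A \<ge> 1 - real (r choose k) * \<delta> ^ k"
  proof -
    have "measure PP A = 1 - measure PP (\<Union>S\<in>SS. E S)"
      unfolding A_def PP_def using P.prob_compl[of "\<Union>S\<in>SS. E S"] Us unfolding PP_def
      by auto
    thus ?thesis using U by simp
  qed
  have sub: "A \<subseteq> {Ps \<in> space PP. e_wor (median_rule r Ps) B nb \<le> ereal \<epsilon>}"
  proof safe
    fix Ps assume PsA: "Ps \<in> A"
    hence Psp: "Ps \<in> space PP" by (simp add: A_def)
    hence Psi: "\<And>i. i \<in> I \<Longrightarrow> Ps i \<in> space M" by (auto simp: PP_def I_def space_PiM)
    show "Ps \<in> space PP" by fact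
    have cb: "card {i\<in>I. Ps i \<in> Bad} < k"
    proof (rule ccontr)
      assume "\<not> ?thesis"
      then obtain S where S: "S \<subseteq> {i\<in>I. Ps i \<in> Bad}" "card S = k"
        by (meson not_less obtain_subset_with_card_n)
      hence "S \<in> SS" by (auto simp: SS_def)
      moreover have "Ps \<in> E S" using S Psp Psi unfolding E_def
        by (auto simp: PP_def I_def space_PiM PiE_def Pi_def)
      ultimately show False using PsA by (auto simp: A_def)
    qed
    have part: "I = {i\<in>I. Ps i \<in> Bad} \<union> {i\<in>I. Ps i \<in> G}"
      using Psi by (auto simp: Bad_def)
    have "card I \<le> card {i\<in>I. Ps i \<in> Bad} + card {i\<in>I. Ps i \<in> G}"
      by (subst part) (rule card_Un_le)
    hence cg: "card {i\<in>I. Ps i \<in> G} \<ge> k"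
      using cb assms(9) by (auto simp: I_def k_def elim!: oddE)
    show "e_wor (median_rule r Ps) B nb \<le> ereal \<epsilon>"
      unfolding e_wor_def
    proof (rule SUP_least)
      fix f assume f: "f \<in> {f \<in> B. nb f \<le> 1}"
      define xs where "xs = map (\<lambda>i. Q_rule (Ps i) f) [0..<r]"
      have lx: "length xs = r" by (simp add: xs_def)
      have "{i\<in>I. Ps i \<in> G} \<subseteq> {i. i < length xs \<and> \<bar>xs!i - I_s f\<bar> \<le> \<epsilon>}"
        using f ewor_pointwise by (auto simp: xs_def I_def G_def)
      hence "card {i\<in>I. Ps i \<in> G} \<le> card {i. i < length xs \<and> \<bar>xs!i - I_s f\<bar> \<le> \<epsilon>}"
        by (intro card_mono) auto
      hence "\<bar>median_list xs - I_s f\<bar> \<le> \<epsilon>"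
        using cg assms(9) lx by (intro median_close) (auto simp: k_def)
      thus "ereal \<bar>median_rule r Ps f - I_s f\<bar> \<le> ereal \<epsilon>"
        by (simp add: median_rule_def xs_def)
    qed
  qed
  show ?thesis using As sub mA unfolding PP_def k_def by blast
qed

end
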